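(* For every $\mu \in \mathcal{X}$ and every probability distribution $P_X$ on $\mathcal{X}$, $D(\mu ; P_X) \in [0, 2]$. Moreover, with $X_1, X_2 \sim P_X$ independent: (i) $D(\mu ; P_X) = 0$ if and only if $P_X(\{\mu\}) = 0$ and $P ( L[X_1, X_2, \mu] \cup L[X_2, X_1, \mu] ) = 1$; (ii) $D(\mu ; P_X) = 2$ if and only if $P_X(\{\mu\}) = 0$ and $P( L[X_1, \mu, X_2] ) = 1$.
   Context: $(\mathcal{X}, d)$ is a complete separable metric space with its Borel $\sigma$-algebra. Define $h: \mathcal{X}^3 \to \mathbb{R}$ by $h(x_1, x_2, x_3) := \mathbb{I}( x_3 \notin \{x_1, x_2\} ) \dfrac{ d^2(x_1, x_3) + d^2(x_2, x_3) - d^2(x_1, x_2) }{d(x_1, x_3)\, d(x_2, x_3) }$, where $h := 0$ when $x_3 \in \{x_1,x_2\}$. The metric spatial depth of $\mu \in \mathcal{X}$ with respect to a probability distribution $P_X$ on $\mathcal{X}$ is $D(\mu; P_X) := 1 - \frac{1}{2} \mathrm{E} \{ h(X_1, X_2, \mu) \}$, where $X_1, X_2 \sim P_X$ are independent. For $x_1,x_2,x_3\in\mathcal{X}$, $L[x_1, x_2, x_3]$ denotes the event (condition) that $d(x_1, x_3) = d(x_1, x_2) + d(x_2, x_3)$, i.e. the three points lie on a metric line with $x_2$ between $x_1$ and $x_3$. *)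

theory Defs
  imports "HOL-Probability.Probability"
begin

definition msd_h :: "'a::metric_space \<Rightarrow> 'a \<Rightarrow> 'a \<Rightarrow> real" where
  "msd_h x1 x2 x3 =
     (if x3 \<notin> {x1, x2}
      then ((dist x1 x3)\<^sup>2 + (dist x2 x3)\<^sup>2 - (dist x1 x2)\<^sup>2) / (dist x1 x3 * dist x2 x3)
      else 0)"

definition msd_depth :: "'a::metric_space \<Rightarrow> 'a measure \<Rightarrow> real" where
  "msd_depth \<mu> P = 1 - (1/2) * (\<integral>z. msd_h (fst z) (snd z) \<mu> \<partial>(P \<Otimes>\<^sub>M P))"

definition metric_line :: "'a::metric_space \<Rightarrow> 'a \<Rightarrow> 'a \<Rightarrow> bool" where
  "metric_line x1 x2 x3 \<longleftrightarrow> dist x1 x3 = dist x1 x2 + dist x2 x3"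

end

theory Submission
  imports Defs
begin

lemma h_bounds: "-2 \<le> msd_h x y (m::'a::metric_space) \<and> msd_h x y m \<le> 2"
proof (cases "m \<in> {x,y}")
  case True then show ?thesis by (simp add: msd_h_def)
next
  case False
  define a where "a = dist x m" define b where "b = dist y m" define c where "c = dist x y"
  have a: "a > 0" "b > 0" using False by (auto simp: a_def b_def)
  have t1: "c \<le> a + b" unfolding a_def b_def c_def by (metis dist_commute dist_triangle)
  have t2: "a \<le> c + b" unfolding a_def b_def c_def by (metis dist_triangle)
  have t3: "b \<le> c + a" unfolding a_def b_def c_def by (metis dist_commute dist_triangle)
  have c0: "c \<ge> 0" by (simp add: c_def)
  have "c^2 \<le> (a+b)^2" using t1 c0 by (intro power_mono) auto
  moreover have "(a-b)^2 \<le> c^2" using t2 t3 c0 by (simp add: abs_le_square_iff[symmetric] abs_le_iff)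
  ultimately have "-2 * (a*b) \<le> a^2+b^2-c^2" "a^2+b^2-c^2 \<le> 2*(a*b)" by (auto simp: power2_eq_square algebra_simps)
  moreover have "a*b > 0" using a by simp
  ultimately show ?thesis using False
    by (simp add: msd_h_def a_def[symmetric] b_def[symmetric] c_def[symmetric] divide_simps)
qed

lemma h_eq2: "msd_h x y (m::'a::metric_space) = 2 \<longleftrightarrow>
   (x \<noteq> m \<and> y \<noteq> m) \<and> (metric_line x y m \<or> metric_line y x m)"
proof (cases "m \<in> {x,y}")
  case True then show ?thesis by (auto simp: msd_h_def)
next
  case False
  define a where "a = dist x m" define b where "b = dist y m" define c where "c = dist x y"
  have a: "a > 0" "b > 0" using False by (auto simp: a_def b_def)
  have c0: "c \<ge> 0" by (simp add: c_def)
  have "msd_h x y m = 2 \<longleftrightarrow> a^2+b^2-c^2 = 2*(a*b)" using False a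
    by (simp add: msd_h_def a_def[symmetric] b_def[symmetric] c_def[symmetric] divide_simps)
  also have "\<dots> \<longleftrightarrow> c^2 = (a-b)^2" by (auto simp: power2_eq_square algebra_simps)
  also have "\<dots> \<longleftrightarrow> c = \<bar>a-b\<bar>" using c0 by (metis abs_of_nonneg power2_abs power2_eq_iff_nonneg abs_ge_zero)
  also have "\<dots> \<longleftrightarrow> (a = c + b \<or> b = c + a)" using c0 by auto
  finally show ?thesis using False
    by (auto simp: metric_line_def a_def b_def c_def dist_commute)
qed

lemma h_eqm2: "msd_h x y (m::'a::metric_space) = -2 \<longleftrightarrow>
   (x \<noteq> m \<and> y \<noteq> m) \<and> metric_line x m y"
proof (cases "m \<in> {x,y}")
  case True then show ?thesis by (auto simp: msd_h_def)
next
  case False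
  define a where "a = dist x m" define b where "b = dist y m" define c where "c = dist x y"
  have a: "a > 0" "b > 0" using False by (auto simp: a_def b_def)
  have c0: "c \<ge> 0" by (simp add: c_def)
  have "msd_h x y m = -2 \<longleftrightarrow> a^2+b^2-c^2 = -2*(a*b)" using False a
    by (simp add: msd_h_def a_def[symmetric] b_def[symmetric] c_def[symmetric] divide_simps)
  also have "\<dots> \<longleftrightarrow> c^2 = (a+b)^2" by (auto simp: power2_eq_square algebra_simps)
  also have "\<dots> \<longleftrightarrow> c = a+b" using c0 a by (metis power2_eq_iff_nonneg add_nonneg_nonneg less_imp_le)
  finally show ?thesis using False
    by (auto simp: metric_line_def a_def b_def c_def dist_commute)
qed



lemma cont_fst_dist1: "continuous_on UNIV (\<lambda>z::'a::metric_space\<times>'a. dist (fst z) m)"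
  by (intro continuous_on_dist continuous_on_fst continuous_on_id continuous_on_const)
lemma cont_fst_dist2: "continuous_on UNIV (\<lambda>z::'a::metric_space\<times>'a. dist (snd z) m)"
  by (intro continuous_on_dist continuous_on_snd continuous_on_id continuous_on_const)
lemma cont_fst_dist3: "continuous_on UNIV (\<lambda>z::'a::metric_space\<times>'a. dist (fst z) (snd z))"
  by (intro continuous_on_dist continuous_on_fst continuous_on_snd continuous_on_id)


lemma o1: "open {z::'a::metric_space\<times>'a. m \<notin> {fst z, snd z}}"
proof -
  have c: "closed ({m} \<times> (UNIV::'a set) \<union> UNIV \<times> {m})"
    by (intro closed_Un closed_Times closed_singleton closed_UNIV)
  have e: "{z::'a\<times>'a. m \<notin> {fst z, snd z}} = - ({m} \<times> UNIV \<union> UNIV \<times> {m})" by auto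
  show ?thesis unfolding e using c by (rule open_Compl)
qed

lemma meas_h: "(\<lambda>z. msd_h (fst z) (snd z) (m::'a::metric_space)) \<in> borel_measurable borel"
  unfolding msd_h_def
proof (rule measurable_If)
  show "{z \<in> space borel. m \<notin> {fst z, snd z}} \<in> sets borel" using o1[of m] by simp
  show "(\<lambda>x::'a\<times>'a. 0::real) \<in> borel_measurable borel" by simp
  have m1: "(\<lambda>z::'a\<times>'a. dist (fst z) m) \<in> borel_measurable borel"
    by (rule borel_measurable_continuous_onI[OF cont_fst_dist1])
  have m2: "(\<lambda>z::'a\<times>'a. dist (snd z) m) \<in> borel_measurable borel"
    by (rule borel_measurable_continuous_onI[OF cont_fst_dist2])
  have m3: "(\<lambda>z::'a\<times>'a. dist (fst z) (snd z)) \<in> borel_measurable borel"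
    by (rule borel_measurable_continuous_onI[OF cont_fst_dist3])
  show "(\<lambda>z::'a\<times>'a. ((dist (fst z) m)\<^sup>2 + (dist (snd z) m)\<^sup>2 - (dist (fst z) (snd z))\<^sup>2) / (dist (fst z) m * dist (snd z) m)) \<in> borel_measurable borel"
    using m1 m2 m3 by measurable
qed
lemma meas_l: "{z::'a::metric_space \<times> 'a. metric_line (fst z) (snd z) m \<or> metric_line (snd z) (fst z) m} \<in> sets borel"
  "{z::'a::metric_space \<times> 'a. metric_line (fst z) m (snd z)} \<in> sets borel"
proof -
  have "closed {z::'a \<times> 'a. dist (fst z) m = dist (fst z) (snd z) + dist (snd z) m}"
    by (rule closed_Collect_eq) (intro continuous_intros)+
  moreover have "closed {z::'a \<times> 'a. dist (snd z) m = dist (snd z) (fst z) + dist (fst z) m}"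
    by (rule closed_Collect_eq) (intro continuous_intros)+
  ultimately have "closed {z::'a \<times> 'a. metric_line (fst z) (snd z) m \<or> metric_line (snd z) (fst z) m}"
    unfolding metric_line_def by (rule closed_Collect_disj)
  then show "{z::'a::metric_space \<times> 'a. metric_line (fst z) (snd z) m \<or> metric_line (snd z) (fst z) m} \<in> sets borel"
    by simp
  have "closed {z::'a \<times> 'a. dist (fst z) (snd z) = dist (fst z) m + dist m (snd z)}"
    by (rule closed_Collect_eq) (intro continuous_intros)+
  then show "{z::'a::metric_space \<times> 'a. metric_line (fst z) m (snd z)} \<in> sets borel"
    unfolding metric_line_def by simp
qed
theorem theorem3:
  fixes P :: "'a::polish_space measure" and \<mu> :: 'a
  assumes "prob_space P" and "sets P = sets borel"
  shows "msd_depth \<mu> P \<in> {0..2} \<and>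
         (msd_depth \<mu> P = 0 \<longleftrightarrow>
           measure P {\<mu>} = 0 \<and>
           measure (P \<Otimes>\<^sub>M P)
             {z \<in> space (P \<Otimes>\<^sub>M P). metric_line (fst z) (snd z) \<mu> \<or> metric_line (snd z) (fst z) \<mu>} = 1) \<and>
         (msd_depth \<mu> P = 2 \<longleftrightarrow>
           measure P {\<mu>} = 0 \<and>
           measure (P \<Otimes>\<^sub>M P)
             {z \<in> space (P \<Otimes>\<^sub>M P). metric_line (fst z) \<mu> (snd z)} = 1)"
proof -
  interpret P: prob_space P by fact
  interpret Q: pair_prob_space P P
    by (simp add: pair_prob_space_def pair_sigma_finite_def P.sigma_finite_measure_axioms P.prob_space_axioms)
  define Q where "Q = P \<Otimes>\<^sub>M P"
  define f where "f = (\<lambda>z. msd_h (fst z) (snd z) \<mu>)"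
  have hsets: "sets Q = sets borel"
    unfolding Q_def using sets_pair_measure_cong[OF assms(2) assms(2)] by (metis borel_prod)
  have hspace: "space Q = UNIV" using sets_eq_imp_space_eq[OF hsets] by simp
  have hspP: "space P = UNIV" using sets_eq_imp_space_eq[OF assms(2)] by simp
  have fm: "f \<in> borel_measurable Q"
    using meas_h[of \<mu>] unfolding f_def by (simp add: measurable_cong_sets[OF hsets refl])
  have fb: "-2 \<le> f z \<and> f z \<le> 2" for z unfolding f_def by (rule h_bounds)
  have int: "integrable Q f"
    unfolding Q_def by (rule Q.integrable_const_bound[where B=2]) (use fm fb in \<open>auto simp: Q_def abs_le_iff intro!: AE_I2, smt (verit) fb\<close>)
  define E where "E = integral\<^sup>L Q f"
  have D: "msd_depth \<mu> P = 1 - E/2" unfolding msd_depth_def E_def Q_def f_def by simp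
  have c2: "integral\<^sup>L Q (\<lambda>_. c) = c" for c :: real unfolding Q_def by (simp add: Q.prob_space)
  have mQ: "measure Q (space Q) = 1" unfolding Q_def by (simp add: Q.prob_space)
  have icQ: "integrable Q (\<lambda>_. c::real)" for c unfolding Q_def by simp
  have Ele: "E \<le> 2" unfolding E_def using integral_mono[OF int icQ[of 2]] fb mQ by auto
  have Ege: "-2 \<le> E" unfolding E_def using integral_mono[OF icQ[of "-2"] int] fb mQ by auto
  have E2: "E = 2 \<longleftrightarrow> (AE z in Q. f z = 2)"
  proof -
    have "integral\<^sup>L Q (\<lambda>z. 2 - f z) = 2 - E" unfolding E_def
      using Bochner_Integration.integral_diff[OF icQ[of 2] int] mQ by simp
    moreover have "(integral\<^sup>L Q (\<lambda>z. 2 - f z) = 0) = (AE z in Q. 2 - f z = 0)"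
      by (rule integral_nonneg_eq_0_iff_AE) (use int icQ fb in \<open>auto intro!: AE_I2 Bochner_Integration.integrable_diff\<close>)
    ultimately show ?thesis by auto
  qed
  have Em2: "E = -2 \<longleftrightarrow> (AE z in Q. f z = -2)"
  proof -
    have "integral\<^sup>L Q (\<lambda>z. f z + 2) = E + 2" unfolding E_def
      using Bochner_Integration.integral_add[OF int icQ[of 2]] mQ by simp
    moreover have "(integral\<^sup>L Q (\<lambda>z. f z + 2) = 0) = (AE z in Q. f z + 2 = 0)"
      by (rule integral_nonneg_eq_0_iff_AE) (use int icQ fb in \<open>auto intro!: AE_I2 Bochner_Integration.integrable_add, smt (verit) fb\<close>)
    moreover have "(AE z in Q. f z + 2 = 0) \<longleftrightarrow> (AE z in Q. f z = -2)" by (rule AE_cong) auto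
    ultimately show ?thesis by auto
  qed
  have sing: "{\<mu>} \<in> sets P" using assms(2) by simp
  have nonmu: "(AE z in Q. fst z \<noteq> \<mu> \<and> snd z \<noteq> \<mu>) \<longleftrightarrow> measure P {\<mu>} = 0"
  proof -
    define N where "N = {\<mu>} \<times> UNIV \<union> UNIV \<times> {\<mu>}"
    have N1: "{\<mu>} \<times> UNIV \<in> sets Q" "UNIV \<times> {\<mu>} \<in> sets Q" unfolding Q_def
      using sing hspP by (metis pair_measureI sets.top)+
    have NQ: "N \<in> sets Q" using N1 unfolding N_def by auto
    have e1: "emeasure Q ({\<mu>} \<times> UNIV) = emeasure P {\<mu>}"
      unfolding Q_def using sing hspP
      by (metis P.emeasure_pair_measure_Times P.emeasure_space_1 mult.right_neutral sets.top)
    have e2: "emeasure Q (UNIV \<times> {\<mu>}) = emeasure P {\<mu>}"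
      unfolding Q_def using sing hspP
      by (metis P.emeasure_pair_measure_Times P.emeasure_space_1 mult_1 sets.top)
    have "(AE z in Q. fst z \<noteq> \<mu> \<and> snd z \<noteq> \<mu>) \<longleftrightarrow> emeasure Q N = 0"
      by (rule AE_iff_measurable[OF NQ]) (auto simp: hspace N_def)
    also have "\<dots> \<longleftrightarrow> emeasure P {\<mu>} = 0"
    proof
      assume "emeasure Q N = 0"
      then have "emeasure Q ({\<mu>} \<times> UNIV) \<le> 0"
        using emeasure_mono[of "{\<mu>} \<times> UNIV" N Q] NQ unfolding N_def by auto
      then show "emeasure P {\<mu>} = 0" using e1 by simp
    next
      assume "emeasure P {\<mu>} = 0"
      then have "emeasure Q N \<le> 0"
        using emeasure_subadditive[OF N1] e1 e2 unfolding N_def by simp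
      then show "emeasure Q N = 0" by simp
    qed
    also have "\<dots> \<longleftrightarrow> measure P {\<mu>} = 0" by (simp add: P.emeasure_eq_measure)
    finally show ?thesis .
  qed
  have lineAE: "measure Q {z \<in> space Q. L z} = 1 \<longleftrightarrow> (AE z in Q. L z)"
    if "{z. L z} \<in> sets borel" for L
  proof -
    have "{z \<in> space Q. L z} \<in> sets Q" using that hsets hspace by simp
    then have "measure Q {z \<in> space Q. L z} = 1 \<longleftrightarrow> (AE x in Q. x \<in> {z \<in> space Q. L z})"
      unfolding Q_def by (rule Q.prob_eq_1)
    also have "\<dots> \<longleftrightarrow> (AE z in Q. L z)" by (rule AE_cong) auto
    finally show ?thesis .
  qed
  have A1: "(AE z in Q. f z = 2) \<longleftrightarrow> measure P {\<mu>} = 0 \<and>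
     measure Q {z \<in> space Q. metric_line (fst z) (snd z) \<mu> \<or> metric_line (snd z) (fst z) \<mu>} = 1"
  proof -
    have "(AE z in Q. f z = 2) \<longleftrightarrow> (AE z in Q. (fst z \<noteq> \<mu> \<and> snd z \<noteq> \<mu>) \<and> (metric_line (fst z) (snd z) \<mu> \<or> metric_line (snd z) (fst z) \<mu>))"
      unfolding f_def h_eq2 by (rule refl)
    also have "\<dots> \<longleftrightarrow> (AE z in Q. fst z \<noteq> \<mu> \<and> snd z \<noteq> \<mu>) \<and> (AE z in Q. metric_line (fst z) (snd z) \<mu> \<or> metric_line (snd z) (fst z) \<mu>)"
      by (rule AE_conj_iff)
    finally show ?thesis using nonmu lineAE[OF meas_l(1)] by (simp only:)
  qed
  have A2: "(AE z in Q. f z = -2) \<longleftrightarrow> measure P {\<mu>} = 0 \<and>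
     measure Q {z \<in> space Q. metric_line (fst z) \<mu> (snd z)} = 1"
  proof -
    have "(AE z in Q. f z = -2) \<longleftrightarrow> (AE z in Q. (fst z \<noteq> \<mu> \<and> snd z \<noteq> \<mu>) \<and> metric_line (fst z) \<mu> (snd z))"
      unfolding f_def h_eqm2 by (rule refl)
    also have "\<dots> \<longleftrightarrow> (AE z in Q. fst z \<noteq> \<mu> \<and> snd z \<noteq> \<mu>) \<and> (AE z in Q. metric_line (fst z) \<mu> (snd z))"
      by (rule AE_conj_iff)
    finally show ?thesis using nonmu lineAE[OF meas_l(2)] by (simp only:)
  qed
  show ?thesis
    using A1 A2 E2 Em2 Ele Ege unfolding D Q_def[symmetric] by auto
qed
end
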